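(* For $k\ge0$ let $B_k$ be the family of bar $k$-visibility graphs and $A_k$ the family of arc $k$-visibility graphs. Then $A_j\not\subseteq B_i$ for all $i,j\ge 0$.
   Context: A bar $k$-visibility representation is a finite collection of pairwise disjoint closed horizontal line segments (bars) in the plane; two bars are adjacent if there is a vertical segment with endpoints on the two bars intersecting at most $k$ other bars. An arc $k$-visibility representation is a finite collection of pairwise disjoint circular arcs centered at a common point $O$; two arcs are adjacent if there is a segment contained in a line through $O$ (possibly passing through $O$) with endpoints on the two arcs intersecting at most $k$ other arcs (an arc met twice by the radial line counted once). In each case the graph has one vertex per bar/arc and the stated adjacency. *)

theory Defs
  imports "HOL-Analysis.Analysis"
begin

definition bar_points :: "real \<times> real \<times> real \<Rightarrow> complex set" where
  "bar_points b = (case b of (l, r, y) \<Rightarrow> {Complex x y | x. l \<le> x \<and> x \<le> r})"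

definition valid_bar :: "real \<times> real \<times> real \<Rightarrow> bool" where
  "valid_bar b = (case b of (l, r, y) \<Rightarrow> l < r)"

(* An arc (rho, a, b) centred at the origin O = 0, with rho > 0, a < b < a + 2 pi:
   the set {rho * cis t | a <= t <= b}. *)
definition arc_points :: "real \<times> real \<times> real \<Rightarrow> complex set" where
  "arc_points c = (case c of (\<rho>, a, b) \<Rightarrow> {complex_of_real \<rho> * cis t | t. a \<le> t \<and> t \<le> b})"

definition valid_arc :: "real \<times> real \<times> real \<Rightarrow> bool" where
  "valid_arc c = (case c of (\<rho>, a, b) \<Rightarrow> 0 < \<rho> \<and> a < b \<and> b < a + 2 * pi)"

definition pairwise_disjoint_on :: "nat set \<Rightarrow> (nat \<Rightarrow> complex set) \<Rightarrow> bool" where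
  "pairwise_disjoint_on V S = (\<forall>u\<in>V. \<forall>v\<in>V. u \<noteq> v \<longrightarrow> S u \<inter> S v = {})"

definition other_hits :: "nat set \<Rightarrow> (nat \<Rightarrow> complex set) \<Rightarrow> nat \<Rightarrow> nat \<Rightarrow> complex \<Rightarrow> complex \<Rightarrow> nat" where
  "other_hits V S u v p q = card {w \<in> V - {u, v}. S w \<inter> closed_segment p q \<noteq> {}}"

definition bar_k_visible :: "nat \<Rightarrow> nat set \<Rightarrow> (nat \<Rightarrow> real \<times> real \<times> real) \<Rightarrow> nat \<Rightarrow> nat \<Rightarrow> bool" where
  "bar_k_visible k V B u v =
     (\<exists>p q. p \<in> bar_points (B u) \<and> q \<in> bar_points (B v) \<and> Re p = Re q \<and>
            other_hits V (\<lambda>w. bar_points (B w)) u v p q \<le> k)"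

(* arc k-visibility: segment on a line through O with endpoints on the two arcs meeting
   <= k other arcs (each arc counted once) *)
definition arc_k_visible :: "nat \<Rightarrow> nat set \<Rightarrow> (nat \<Rightarrow> real \<times> real \<times> real) \<Rightarrow> nat \<Rightarrow> nat \<Rightarrow> bool" where
  "arc_k_visible k V A u v =
     (\<exists>p q. p \<in> arc_points (A u) \<and> q \<in> arc_points (A v) \<and> collinear {0, p, q} \<and>
            other_hits V (\<lambda>w. arc_points (A w)) u v p q \<le> k)"

definition bar_k_vis_graph :: "nat \<Rightarrow> nat set \<Rightarrow> (nat \<Rightarrow> nat \<Rightarrow> bool) \<Rightarrow> bool" where
  "bar_k_vis_graph k V E =
     (finite V \<and> (\<exists>B. (\<forall>v\<in>V. valid_bar (B v)) \<and>
        pairwise_disjoint_on V (\<lambda>v. bar_points (B v)) \<and>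
        (\<forall>u v. E u v \<longleftrightarrow> u \<in> V \<and> v \<in> V \<and> u \<noteq> v \<and> bar_k_visible k V B u v)))"

definition arc_k_vis_graph :: "nat \<Rightarrow> nat set \<Rightarrow> (nat \<Rightarrow> nat \<Rightarrow> bool) \<Rightarrow> bool" where
  "arc_k_vis_graph k V E =
     (finite V \<and> (\<exists>A. (\<forall>v\<in>V. valid_arc (A v)) \<and>
        pairwise_disjoint_on V (\<lambda>v. arc_points (A v)) \<and>
        (\<forall>u v. E u v \<longleftrightarrow> u \<in> V \<and> v \<in> V \<and> u \<noteq> v \<and> arc_k_visible k V A u v)))"

end

theory Submission
  imports Defs
begin

definition ang :: "real \<Rightarrow> real" where "ang c = c * pi / 12"

lemma cis_eq_imp: assumes "cis t = cis s" shows "\<exists>k::int. t = s + 2*pi* of_int k"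
proof -
  have "cis (t - s) = 1" using assms by (simp add: cis_divide[symmetric])
  hence "cos (t - s) = 1" by (metis Re_complex_of_real cis.sel(1) of_real_1)
  then obtain n::int where "t - s = real_of_int n * 2 * pi" using cos_one_2pi_int by blast
  thus ?thesis by (intro exI[of _ n]) (simp add: algebra_simps)
qed

lemma cis_period: "cis (s + 2*pi* of_int k) = cis s"
proof -
  have "cis (2*pi* of_int k) = 1" by (simp add: complex_eq_iff)
  thus ?thesis by (simp add: cis_mult[symmetric])
qed

lemma line_arc:
  assumes "0 < \<rho>" "complex_of_real la * cis (ang g) \<in> arc_points (\<rho>, ang a, ang b)"
  shows "\<exists>s k. a \<le> s \<and> s \<le> b \<and> ((la = \<rho> \<and> s = g + 24* of_int k) \<or> (la = -\<rho> \<and> s = g + 12 + 24* of_int k))"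
proof -
  obtain t where t: "complex_of_real la * cis (ang g) = complex_of_real \<rho> * cis t" "ang a \<le> t" "t \<le> ang b"
    using assms(2) unfolding arc_points_def by auto
  have "norm (complex_of_real la * cis (ang g)) = norm (complex_of_real \<rho> * cis t)" using t(1) by simp
  hence "\<bar>la\<bar> = \<rho>" using assms(1) by (simp add: norm_mult)
  hence cs: "la = \<rho> \<or> la = -\<rho>" by auto
  define s where "s = t * 12 / pi"
  have ts: "t = ang s" unfolding s_def ang_def by simp
  have sa: "a \<le> s" "s \<le> b" using t(2,3) unfolding ts ang_def by (simp_all add: divide_right_mono mult_le_cancel_right pi_gt_zero)
  show ?thesis
  proof (cases "la = \<rho>")
    case True
    hence "cis t = cis (ang g)" using t(1) assms(1) by simp
    then obtain k::int where "t = ang g + 2*pi* of_int k" using cis_eq_imp by blast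
    hence "s = g + 24 * of_int k" unfolding s_def ang_def by (simp add: field_simps)
    thus ?thesis using sa True by blast
  next
    case False
    hence l: "la = -\<rho>" using cs by auto
    have "complex_of_real \<rho> * cis t = complex_of_real \<rho> * (- cis (ang g))" using t(1) l by simp
    hence "cis t = - cis (ang g)" using assms(1) mult_cancel_left[of "complex_of_real \<rho>" "cis t" "- cis (ang g)"] by auto
    hence "cis t = cis (ang g + pi)" by (simp add: minus_cis)
    then obtain k::int where "t = ang g + pi + 2*pi* of_int k" using cis_eq_imp by blast
    hence "s = g + 12 + 24 * of_int k" unfolding s_def ang_def by (simp add: field_simps)
    thus ?thesis using sa l by blast
  qed
qed

lemma on_arc:
  assumes "(la = \<rho> \<and> a \<le> g + 24* of_int m \<and> g + 24* of_int m \<le> b) \<or> (la = -\<rho> \<and> a \<le> g + 12 + 24* of_int m \<and> g + 12 + 24* of_int m \<le> b)"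
  shows "complex_of_real la * cis (ang g) \<in> arc_points (\<rho>, ang a, ang b)"
  using assms
proof
  assume h: "la = \<rho> \<and> a \<le> g + 24* of_int m \<and> g + 24* of_int m \<le> b"
  have "cis (ang (g + 24* of_int m)) = cis (ang g)"
    using cis_period[of "ang g" m] by (simp add: ang_def field_simps)
  moreover have "ang a \<le> ang (g + 24* of_int m)" "ang (g + 24* of_int m) \<le> ang b"
    using h by (simp_all add: ang_def divide_right_mono)
  ultimately show ?thesis using h unfolding arc_points_def
    by (auto intro!: exI[of _ "ang (g + 24 * of_int m)"])
next
  assume h: "la = -\<rho> \<and> a \<le> g + 12 + 24* of_int m \<and> g + 12 + 24* of_int m \<le> b"
  have "cis (ang (g + 12 + 24* of_int m)) = cis (ang g + pi)"
    using cis_period[of "ang g + pi" m] by (simp add: ang_def field_simps)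
  also have "\<dots> = - cis (ang g)" by (simp add: minus_cis)
  finally have e: "cis (ang (g + 12 + 24* of_int m)) = - cis (ang g)" .
  moreover have "ang a \<le> ang (g + 12 + 24* of_int m)" "ang (g + 12 + 24* of_int m) \<le> ang b"
    using h by (simp_all add: ang_def divide_right_mono)
  ultimately show ?thesis using h unfolding arc_points_def
    by (auto intro!: exI[of _ "ang (g + 12 + 24* of_int m)"])
qed

lemma seg_line:
  assumes "z \<in> closed_segment (complex_of_real la1 * cis \<theta>) (complex_of_real la2 * cis \<theta>)"
  shows "\<exists>la. min la1 la2 \<le> la \<and> la \<le> max la1 la2 \<and> z = complex_of_real la * cis \<theta>"
proof -
  obtain u where u: "0 \<le> u" "u \<le> 1" "z = (1-u) *\<^sub>R (complex_of_real la1 * cis \<theta>) + u *\<^sub>R (complex_of_real la2 * cis \<theta>)"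
    using assms by (auto simp: in_segment)
  have "z = complex_of_real ((1-u)*la1 + u*la2) * cis \<theta>" using u(3) by (simp add: scaleR_conv_of_real algebra_simps)
  moreover have "min la1 la2 \<le> (1-u)*la1 + u*la2" "(1-u)*la1 + u*la2 \<le> max la1 la2"
  proof -
    have e: "(1-u)*la1 + u*la2 = la1 + u*(la2-la1)" "(1-u)*la1 + u*la2 = la2 + (1-u)*(la1-la2)" by (simp_all add: algebra_simps)
    have "min la1 la2 \<le> (1-u)*la1 + u*la2 \<and> (1-u)*la1 + u*la2 \<le> max la1 la2"
    proof (cases "la1 \<le> la2")
      case True
      have "u*(la2-la1) \<le> 1*(la2 - la1)" using u(2) True by (intro mult_right_mono) auto
      moreover have "0 \<le> u*(la2-la1)" using u(1) True by simp
      ultimately show ?thesis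
        using True e(1) unfolding min_def max_def by (simp only: if_True if_False mult_1_left) linarith
    next
      case False
      have "(1-u)*(la1-la2) \<le> 1*(la1 - la2)" using u(1) False by (intro mult_right_mono) auto
      moreover have "0 \<le> (1-u)*(la1-la2)" using u(2) False by simp
      ultimately show ?thesis
        using False e(2) unfolding min_def max_def by (simp only: if_True if_False mult_1_left) linarith
    qed
    thus "min la1 la2 \<le> (1-u)*la1 + u*la2" "(1-u)*la1 + u*la2 \<le> max la1 la2" by auto
  qed
  ultimately show ?thesis by blast
qed

lemma int5: "(k::int) \<le> -2 \<or> k = -1 \<or> k = 0 \<or> k = 1 \<or> 2 \<le> k" by linarith

lemma no_hit:
  assumes "0 < \<rho>"
  and "\<And>s k. a \<le> s \<Longrightarrow> s \<le> b \<Longrightarrow> real_of_int k \<le> -2 \<or> real_of_int k = -1 \<or> real_of_int k = 0 \<or> real_of_int k = 1 \<or> 2 \<le> real_of_int k \<Longrightarrow>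
      \<not> (min la1 la2 \<le> \<rho> \<and> \<rho> \<le> max la1 la2 \<and> s = g + 24* of_int k) \<and> \<not> (min la1 la2 \<le> -\<rho> \<and> -\<rho> \<le> max la1 la2 \<and> s = g + 12 + 24* of_int k)"
  shows "arc_points (\<rho>, ang a, ang b) \<inter> closed_segment (complex_of_real la1 * cis (ang g)) (complex_of_real la2 * cis (ang g)) = {}"
proof (rule ccontr)
  assume "\<not> ?thesis"
  then obtain z where z: "z \<in> arc_points (\<rho>, ang a, ang b)" "z \<in> closed_segment (complex_of_real la1 * cis (ang g)) (complex_of_real la2 * cis (ang g))" by blast
  obtain la where l: "min la1 la2 \<le> la" "la \<le> max la1 la2" "z = complex_of_real la * cis (ang g)" using seg_line[OF z(2)] by blast
  obtain s k where sk: "a \<le> s" "s \<le> b" "(la = \<rho> \<and> s = g + 24* of_int k) \<or> (la = -\<rho> \<and> s = g + 12 + 24* of_int k)"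
    using line_arc[OF assms(1)] z(1) l(3) by blast
  have "real_of_int k \<le> -2 \<or> real_of_int k = -1 \<or> real_of_int k = 0 \<or> real_of_int k = 1 \<or> 2 \<le> real_of_int k"
    using int5[of k] by (elim disjE) simp_all
  from assms(2)[OF sk(1,2) this] sk(3) l show False by auto
qed


lemma arc_pt: "z \<in> arc_points (\<rho>, ang a, ang b) \<Longrightarrow> \<exists>s. a \<le> s \<and> s \<le> b \<and> z = complex_of_real \<rho> * cis (ang s)"
proof -
  assume "z \<in> arc_points (\<rho>, ang a, ang b)"
  then obtain t where t: "z = complex_of_real \<rho> * cis t" "ang a \<le> t" "t \<le> ang b" unfolding arc_points_def by auto
  define s where "s = t * 12 / pi"
  have ts: "t = ang s" unfolding s_def ang_def by simp
  have "a \<le> s" "s \<le> b" using t(2,3) unfolding ts ang_def by (simp_all add: divide_right_mono mult_le_cancel_right pi_gt_zero)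
  thus ?thesis using t(1) ts by blast
qed

lemma arc_disj:
  assumes "0 < \<rho>1" "0 < \<rho>2"
   and "\<And>s s' k. a1 \<le> s \<Longrightarrow> s \<le> b1 \<Longrightarrow> a2 \<le> s' \<Longrightarrow> s' \<le> b2 \<Longrightarrow> \<rho>1 = \<rho>2 \<Longrightarrow>
        real_of_int k \<le> -2 \<or> real_of_int k = -1 \<or> real_of_int k = 0 \<or> real_of_int k = 1 \<or> 2 \<le> real_of_int k \<Longrightarrow> s' \<noteq> s + 24 * of_int k"
  shows "arc_points (\<rho>1, ang a1, ang b1) \<inter> arc_points (\<rho>2, ang a2, ang b2) = {}"
proof (rule ccontr)
  assume "\<not> ?thesis"
  then obtain z where z: "z \<in> arc_points (\<rho>1, ang a1, ang b1)" "z \<in> arc_points (\<rho>2, ang a2, ang b2)" by blast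
  obtain s where s: "a1 \<le> s" "s \<le> b1" "z = complex_of_real \<rho>1 * cis (ang s)" using arc_pt[OF z(1)] by blast
  obtain s' k where sk: "a2 \<le> s'" "s' \<le> b2" "(\<rho>1 = \<rho>2 \<and> s' = s + 24 * of_int k) \<or> (\<rho>1 = -\<rho>2 \<and> s' = s + 12 + 24 * of_int k)"
    using line_arc[OF assms(2)] z(2) s(3) by blast
  have "real_of_int k \<le> -2 \<or> real_of_int k = -1 \<or> real_of_int k = 0 \<or> real_of_int k = 1 \<or> 2 \<le> real_of_int k"
    using int5[of k] by (elim disjE) simp_all
  moreover have "\<rho>1 \<noteq> -\<rho>2" using assms(1,2) by linarith
  ultimately show False using assms(3)[OF s(1,2) sk(1,2)] sk(3) by blast
qed

lemma collinear_line: "la1 \<noteq> 0 \<Longrightarrow> collinear {0, complex_of_real la1 * cis \<theta>, complex_of_real la2 * cis \<theta>}"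
  unfolding collinear_lemma
  by (rule disjI2, rule disjI2, rule exI[of _ "la2/la1"]) (simp add: scaleR_conv_of_real)

lemma vis_wit:
  assumes "finite V" "pa \<noteq> 0"
    "complex_of_real pa * cis \<theta> \<in> arc_points (A u)" "complex_of_real pb * cis \<theta> \<in> arc_points (A v)"
    "\<And>w. w \<in> V - {u,v} \<Longrightarrow> arc_points (A w) \<inter> closed_segment (complex_of_real pa * cis \<theta>) (complex_of_real pb * cis \<theta>) = {}"
  shows "arc_k_visible k V A u v"
proof -
  have H: "{w \<in> V - {u, v}. arc_points (A w) \<inter> closed_segment (complex_of_real pa * cis \<theta>) (complex_of_real pb * cis \<theta>) \<noteq> {}} = {}"
    using assms(5) by blast
  hence "other_hits V (\<lambda>w. arc_points (A w)) u v (complex_of_real pa * cis \<theta>) (complex_of_real pb * cis \<theta>) = 0"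
    unfolding other_hits_def H by simp
  thus ?thesis unfolding arc_k_visible_def using assms(3,4) collinear_line[OF assms(2)] by fastforce
qed

lemma arc_vis_sym: "arc_k_visible k V A u v \<Longrightarrow> arc_k_visible k V A v u"
proof -
  assume "arc_k_visible k V A u v"
  then obtain p q where pq: "p \<in> arc_points (A u)" "q \<in> arc_points (A v)" "collinear {0, p, q}"
    "other_hits V (\<lambda>w. arc_points (A w)) u v p q \<le> k" unfolding arc_k_visible_def by blast
  have c: "collinear {0, q, p}" using pq(3) by (simp add: insert_commute)
  have o: "other_hits V (\<lambda>w. arc_points (A w)) v u q p = other_hits V (\<lambda>w. arc_points (A w)) u v p q"
    unfolding other_hits_def by (simp add: closed_segment_commute insert_commute)
  show ?thesis unfolding arc_k_visible_def
    by (rule exI[of _ q], rule exI[of _ p]) (use pq c o in auto)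
qed



definition bl :: "(nat \<Rightarrow> real \<times> real \<times> real) \<Rightarrow> nat \<Rightarrow> real" where "bl B w = fst (B w)"
definition br :: "(nat \<Rightarrow> real \<times> real \<times> real) \<Rightarrow> nat \<Rightarrow> real" where "br B w = fst (snd (B w))"
definition bY :: "(nat \<Rightarrow> real \<times> real \<times> real) \<Rightarrow> nat \<Rightarrow> real" where "bY B w = snd (snd (B w))"

lemma bar_pts: "bar_points (B w) = {Complex x (bY B w) | x. bl B w \<le> x \<and> x \<le> br B w}"
  unfolding bar_points_def bl_def br_def bY_def by (cases "B w") auto

lemma vseg1: "z \<in> closed_segment (Complex x y1) (Complex x y2) \<Longrightarrow> Re z = x \<and> Im z \<in> closed_segment y1 y2"
proof -
  assume "z \<in> closed_segment (Complex x y1) (Complex x y2)"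
  then obtain u where u: "0 \<le> u" "u \<le> 1" "z = (1-u) *\<^sub>R Complex x y1 + u *\<^sub>R Complex x y2" by (auto simp: in_segment)
  have "Re z = x" using u(3) by (simp add: scaleR_conv_of_real) (simp add: algebra_simps)
  moreover have "Im z = (1-u) *\<^sub>R y1 + u *\<^sub>R y2" using u(3) by simp
  ultimately show ?thesis using u(1,2) by (auto simp: in_segment)
qed

lemma vseg2: "y \<in> closed_segment y1 y2 \<Longrightarrow> Complex x y \<in> closed_segment (Complex x y1) (Complex x y2)"
proof -
  assume "y \<in> closed_segment y1 y2"
  then obtain u where u: "0 \<le> u" "u \<le> 1" "y = (1-u) *\<^sub>R y1 + u *\<^sub>R y2" by (auto simp: in_segment)
  have "Complex x y = (1-u) *\<^sub>R Complex x y1 + u *\<^sub>R Complex x y2" using u(3) by (simp add: complex_eq_iff algebra_simps)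
  thus ?thesis using u(1,2) by (auto simp: in_segment)
qed

lemma bar_hit_iff: "bar_points (B w) \<inter> closed_segment (Complex x y1) (Complex x y2) \<noteq> {} \<longleftrightarrow>
   bl B w \<le> x \<and> x \<le> br B w \<and> bY B w \<in> closed_segment y1 y2"
proof
  assume "bar_points (B w) \<inter> closed_segment (Complex x y1) (Complex x y2) \<noteq> {}"
  then obtain z where z: "z \<in> bar_points (B w)" "z \<in> closed_segment (Complex x y1) (Complex x y2)" by blast
  obtain x' where x': "z = Complex x' (bY B w)" "bl B w \<le> x'" "x' \<le> br B w" using z(1) unfolding bar_pts by blast
  from vseg1[OF z(2)] x' show "bl B w \<le> x \<and> x \<le> br B w \<and> bY B w \<in> closed_segment y1 y2" by simp
next
  assume h: "bl B w \<le> x \<and> x \<le> br B w \<and> bY B w \<in> closed_segment y1 y2"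
  hence "Complex x (bY B w) \<in> bar_points (B w)" unfolding bar_pts by blast
  moreover have "Complex x (bY B w) \<in> closed_segment (Complex x y1) (Complex x y2)" using h vseg2 by blast
  ultimately show "bar_points (B w) \<inter> closed_segment (Complex x y1) (Complex x y2) \<noteq> {}" by blast
qed

definition hitset where "hitset V B u v x = {w \<in> V - {u,v}. bl B w \<le> x \<and> x \<le> br B w \<and> bY B w \<in> closed_segment (bY B u) (bY B v)}"

lemma bar_vis_iff: "bar_k_visible k V B u v \<longleftrightarrow>
  (\<exists>x. bl B u \<le> x \<and> x \<le> br B u \<and> bl B v \<le> x \<and> x \<le> br B v \<and> card (hitset V B u v x) \<le> k)"
proof
  assume "bar_k_visible k V B u v"
  then obtain p q where pq: "p \<in> bar_points (B u)" "q \<in> bar_points (B v)" "Re p = Re q"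
     "other_hits V (\<lambda>w. bar_points (B w)) u v p q \<le> k" unfolding bar_k_visible_def by blast
  obtain x1 where x1: "p = Complex x1 (bY B u)" "bl B u \<le> x1" "x1 \<le> br B u" using pq(1) unfolding bar_pts by blast
  obtain x2 where x2: "q = Complex x2 (bY B v)" "bl B v \<le> x2" "x2 \<le> br B v" using pq(2) unfolding bar_pts by blast
  have e: "x1 = x2" using pq(3) x1 x2 by simp
  have "other_hits V (\<lambda>w. bar_points (B w)) u v p q = card (hitset V B u v x1)"
    unfolding other_hits_def hitset_def x1(1) x2(1) e using bar_hit_iff by presburger
  thus "\<exists>x. bl B u \<le> x \<and> x \<le> br B u \<and> bl B v \<le> x \<and> x \<le> br B v \<and> card (hitset V B u v x) \<le> k"
    using pq(4) x1 x2 e by auto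
next
  assume "\<exists>x. bl B u \<le> x \<and> x \<le> br B u \<and> bl B v \<le> x \<and> x \<le> br B v \<and> card (hitset V B u v x) \<le> k"
  then obtain x where x: "bl B u \<le> x" "x \<le> br B u" "bl B v \<le> x" "x \<le> br B v" "card (hitset V B u v x) \<le> k" by blast
  have p: "Complex x (bY B u) \<in> bar_points (B u)" "Complex x (bY B v) \<in> bar_points (B v)" unfolding bar_pts using x by blast+
  have "other_hits V (\<lambda>w. bar_points (B w)) u v (Complex x (bY B u)) (Complex x (bY B v)) = card (hitset V B u v x)"
    unfolding other_hits_def hitset_def using bar_hit_iff by presburger
  thus "bar_k_visible k V B u v" unfolding bar_k_visible_def using p x(5)
    by (intro exI[of _ "Complex x (bY B u)"] exI[of _ "Complex x (bY B v)"]) auto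
qed

lemma seg_real: "(y::real) \<in> closed_segment a b \<longleftrightarrow> (a \<le> y \<and> y \<le> b \<or> b \<le> y \<and> y \<le> a)"
  by (auto simp: closed_segment_eq_real_ivl)

lemma disj_y:
  assumes "pairwise_disjoint_on V (\<lambda>v. bar_points (B v))" "u \<in> V" "v \<in> V" "u \<noteq> v"
    "bl B u \<le> x" "x \<le> br B u" "bl B v \<le> x" "x \<le> br B v"
  shows "bY B u \<noteq> bY B v"
proof
  assume e: "bY B u = bY B v"
  have "Complex x (bY B u) \<in> bar_points (B u)" "Complex x (bY B u) \<in> bar_points (B v)"
    unfolding bar_pts using assms e by auto
  thus False using assms(1-4) unfolding pairwise_disjoint_on_def by blast
qed

lemma adj0:
  assumes "finite V" "pairwise_disjoint_on V (\<lambda>v. bar_points (B v))" "u \<in> V" "v \<in> V" "u \<noteq> v" "bar_k_visible 0 V B u v"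
  shows "bY B u \<noteq> bY B v \<and> (\<exists>x. bl B u \<le> x \<and> x \<le> br B u \<and> bl B v \<le> x \<and> x \<le> br B v \<and>
     (\<forall>w. w \<in> V \<longrightarrow> w \<noteq> u \<longrightarrow> w \<noteq> v \<longrightarrow> \<not> (bl B w \<le> x \<and> x \<le> br B w \<and> (bY B u < bY B w \<and> bY B w < bY B v \<or> bY B v < bY B w \<and> bY B w < bY B u))))"
proof -
  obtain x where x: "bl B u \<le> x" "x \<le> br B u" "bl B v \<le> x" "x \<le> br B v" "card (hitset V B u v x) \<le> 0"
    using assms(6) unfolding bar_vis_iff by blast
  have "finite (hitset V B u v x)" unfolding hitset_def using assms(1) by simp
  hence "hitset V B u v x = {}" using x(5) by simp
  hence "\<forall>w. w \<in> V \<longrightarrow> w \<noteq> u \<longrightarrow> w \<noteq> v \<longrightarrow> \<not> (bl B w \<le> x \<and> x \<le> br B w \<and> (bY B u < bY B w \<and> bY B w < bY B v \<or> bY B v < bY B w \<and> bY B w < bY B u))"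
    unfolding hitset_def seg_real by auto
  moreover have "bY B u \<noteq> bY B v" using disj_y[OF assms(2-5) x(1-4)] .
  ultimately show ?thesis using x by blast
qed


lemma K5flat:
  fixes l r y :: "nat \<Rightarrow> real"
  assumes "y 0 \<noteq> y 1"
    and "y 0 \<noteq> y 2"
    and "y 0 \<noteq> y 3"
    and "y 0 \<noteq> y 4"
    and "y 1 \<noteq> y 2"
    and "y 1 \<noteq> y 3"
    and "y 1 \<noteq> y 4"
    and "y 2 \<noteq> y 3"
    and "y 2 \<noteq> y 4"
    and "y 3 \<noteq> y 4"
    and "\<exists>x. l 0 \<le> x \<and> x \<le> r 0 \<and> l 1 \<le> x \<and> x \<le> r 1 \<and> (\<forall>w. w < 5 \<longrightarrow> w \<noteq> 0 \<longrightarrow> w \<noteq> 1 \<longrightarrow> \<not> (l w \<le> x \<and> x \<le> r w \<and> (y 0 < y w \<and> y w < y 1 \<or> y 1 < y w \<and> y w < y 0)))"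
    and "\<exists>x. l 0 \<le> x \<and> x \<le> r 0 \<and> l 2 \<le> x \<and> x \<le> r 2 \<and> (\<forall>w. w < 5 \<longrightarrow> w \<noteq> 0 \<longrightarrow> w \<noteq> 2 \<longrightarrow> \<not> (l w \<le> x \<and> x \<le> r w \<and> (y 0 < y w \<and> y w < y 2 \<or> y 2 < y w \<and> y w < y 0)))"
    and "\<exists>x. l 0 \<le> x \<and> x \<le> r 0 \<and> l 3 \<le> x \<and> x \<le> r 3 \<and> (\<forall>w. w < 5 \<longrightarrow> w \<noteq> 0 \<longrightarrow> w \<noteq> 3 \<longrightarrow> \<not> (l w \<le> x \<and> x \<le> r w \<and> (y 0 < y w \<and> y w < y 3 \<or> y 3 < y w \<and> y w < y 0)))"
    and "\<exists>x. l 0 \<le> x \<and> x \<le> r 0 \<and> l 4 \<le> x \<and> x \<le> r 4 \<and> (\<forall>w. w < 5 \<longrightarrow> w \<noteq> 0 \<longrightarrow> w \<noteq> 4 \<longrightarrow> \<not> (l w \<le> x \<and> x \<le> r w \<and> (y 0 < y w \<and> y w < y 4 \<or> y 4 < y w \<and> y w < y 0)))"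
    and "\<exists>x. l 1 \<le> x \<and> x \<le> r 1 \<and> l 2 \<le> x \<and> x \<le> r 2 \<and> (\<forall>w. w < 5 \<longrightarrow> w \<noteq> 1 \<longrightarrow> w \<noteq> 2 \<longrightarrow> \<not> (l w \<le> x \<and> x \<le> r w \<and> (y 1 < y w \<and> y w < y 2 \<or> y 2 < y w \<and> y w < y 1)))"
    and "\<exists>x. l 1 \<le> x \<and> x \<le> r 1 \<and> l 3 \<le> x \<and> x \<le> r 3 \<and> (\<forall>w. w < 5 \<longrightarrow> w \<noteq> 1 \<longrightarrow> w \<noteq> 3 \<longrightarrow> \<not> (l w \<le> x \<and> x \<le> r w \<and> (y 1 < y w \<and> y w < y 3 \<or> y 3 < y w \<and> y w < y 1)))"
    and "\<exists>x. l 1 \<le> x \<and> x \<le> r 1 \<and> l 4 \<le> x \<and> x \<le> r 4 \<and> (\<forall>w. w < 5 \<longrightarrow> w \<noteq> 1 \<longrightarrow> w \<noteq> 4 \<longrightarrow> \<not> (l w \<le> x \<and> x \<le> r w \<and> (y 1 < y w \<and> y w < y 4 \<or> y 4 < y w \<and> y w < y 1)))"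
    and "\<exists>x. l 2 \<le> x \<and> x \<le> r 2 \<and> l 3 \<le> x \<and> x \<le> r 3 \<and> (\<forall>w. w < 5 \<longrightarrow> w \<noteq> 2 \<longrightarrow> w \<noteq> 3 \<longrightarrow> \<not> (l w \<le> x \<and> x \<le> r w \<and> (y 2 < y w \<and> y w < y 3 \<or> y 3 < y w \<and> y w < y 2)))"
    and "\<exists>x. l 2 \<le> x \<and> x \<le> r 2 \<and> l 4 \<le> x \<and> x \<le> r 4 \<and> (\<forall>w. w < 5 \<longrightarrow> w \<noteq> 2 \<longrightarrow> w \<noteq> 4 \<longrightarrow> \<not> (l w \<le> x \<and> x \<le> r w \<and> (y 2 < y w \<and> y w < y 4 \<or> y 4 < y w \<and> y w < y 2)))"
    and "\<exists>x. l 3 \<le> x \<and> x \<le> r 3 \<and> l 4 \<le> x \<and> x \<le> r 4 \<and> (\<forall>w. w < 5 \<longrightarrow> w \<noteq> 3 \<longrightarrow> w \<noteq> 4 \<longrightarrow> \<not> (l w \<le> x \<and> x \<le> r w \<and> (y 3 < y w \<and> y w < y 4 \<or> y 4 < y w \<and> y w < y 3)))"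
  shows False
proof -
  obtain x01 where h01: "l 0 \<le> x01" "x01 \<le> r 0" "l 1 \<le> x01" "x01 \<le> r 1" and q01: "\<forall>w. w < 5 \<longrightarrow> w \<noteq> 0 \<longrightarrow> w \<noteq> 1 \<longrightarrow> \<not> (l w \<le> x01 \<and> x01 \<le> r w \<and> (y 0 < y w \<and> y w < y 1 \<or> y 1 < y w \<and> y w < y 0))"
    using assms(11) by blast
  have f012: "\<not> (l 2 \<le> x01 \<and> x01 \<le> r 2 \<and> (y 0 < y 2 \<and> y 2 < y 1 \<or> y 1 < y 2 \<and> y 2 < y 0))" using q01[rule_format, of 2] by simp
  have f013: "\<not> (l 3 \<le> x01 \<and> x01 \<le> r 3 \<and> (y 0 < y 3 \<and> y 3 < y 1 \<or> y 1 < y 3 \<and> y 3 < y 0))" using q01[rule_format, of 3] by simp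
  have f014: "\<not> (l 4 \<le> x01 \<and> x01 \<le> r 4 \<and> (y 0 < y 4 \<and> y 4 < y 1 \<or> y 1 < y 4 \<and> y 4 < y 0))" using q01[rule_format, of 4] by simp
  obtain x02 where h02: "l 0 \<le> x02" "x02 \<le> r 0" "l 2 \<le> x02" "x02 \<le> r 2" and q02: "\<forall>w. w < 5 \<longrightarrow> w \<noteq> 0 \<longrightarrow> w \<noteq> 2 \<longrightarrow> \<not> (l w \<le> x02 \<and> x02 \<le> r w \<and> (y 0 < y w \<and> y w < y 2 \<or> y 2 < y w \<and> y w < y 0))"
    using assms(12) by blast
  have f021: "\<not> (l 1 \<le> x02 \<and> x02 \<le> r 1 \<and> (y 0 < y 1 \<and> y 1 < y 2 \<or> y 2 < y 1 \<and> y 1 < y 0))" using q02[rule_format, of 1] by simp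
  have f023: "\<not> (l 3 \<le> x02 \<and> x02 \<le> r 3 \<and> (y 0 < y 3 \<and> y 3 < y 2 \<or> y 2 < y 3 \<and> y 3 < y 0))" using q02[rule_format, of 3] by simp
  have f024: "\<not> (l 4 \<le> x02 \<and> x02 \<le> r 4 \<and> (y 0 < y 4 \<and> y 4 < y 2 \<or> y 2 < y 4 \<and> y 4 < y 0))" using q02[rule_format, of 4] by simp
  obtain x03 where h03: "l 0 \<le> x03" "x03 \<le> r 0" "l 3 \<le> x03" "x03 \<le> r 3" and q03: "\<forall>w. w < 5 \<longrightarrow> w \<noteq> 0 \<longrightarrow> w \<noteq> 3 \<longrightarrow> \<not> (l w \<le> x03 \<and> x03 \<le> r w \<and> (y 0 < y w \<and> y w < y 3 \<or> y 3 < y w \<and> y w < y 0))"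
    using assms(13) by blast
  have f031: "\<not> (l 1 \<le> x03 \<and> x03 \<le> r 1 \<and> (y 0 < y 1 \<and> y 1 < y 3 \<or> y 3 < y 1 \<and> y 1 < y 0))" using q03[rule_format, of 1] by simp
  have f032: "\<not> (l 2 \<le> x03 \<and> x03 \<le> r 2 \<and> (y 0 < y 2 \<and> y 2 < y 3 \<or> y 3 < y 2 \<and> y 2 < y 0))" using q03[rule_format, of 2] by simp
  have f034: "\<not> (l 4 \<le> x03 \<and> x03 \<le> r 4 \<and> (y 0 < y 4 \<and> y 4 < y 3 \<or> y 3 < y 4 \<and> y 4 < y 0))" using q03[rule_format, of 4] by simp
  obtain x04 where h04: "l 0 \<le> x04" "x04 \<le> r 0" "l 4 \<le> x04" "x04 \<le> r 4" and q04: "\<forall>w. w < 5 \<longrightarrow> w \<noteq> 0 \<longrightarrow> w \<noteq> 4 \<longrightarrow> \<not> (l w \<le> x04 \<and> x04 \<le> r w \<and> (y 0 < y w \<and> y w < y 4 \<or> y 4 < y w \<and> y w < y 0))"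
    using assms(14) by blast
  have f041: "\<not> (l 1 \<le> x04 \<and> x04 \<le> r 1 \<and> (y 0 < y 1 \<and> y 1 < y 4 \<or> y 4 < y 1 \<and> y 1 < y 0))" using q04[rule_format, of 1] by simp
  have f042: "\<not> (l 2 \<le> x04 \<and> x04 \<le> r 2 \<and> (y 0 < y 2 \<and> y 2 < y 4 \<or> y 4 < y 2 \<and> y 2 < y 0))" using q04[rule_format, of 2] by simp
  have f043: "\<not> (l 3 \<le> x04 \<and> x04 \<le> r 3 \<and> (y 0 < y 3 \<and> y 3 < y 4 \<or> y 4 < y 3 \<and> y 3 < y 0))" using q04[rule_format, of 3] by simp
  obtain x12 where h12: "l 1 \<le> x12" "x12 \<le> r 1" "l 2 \<le> x12" "x12 \<le> r 2" and q12: "\<forall>w. w < 5 \<longrightarrow> w \<noteq> 1 \<longrightarrow> w \<noteq> 2 \<longrightarrow> \<not> (l w \<le> x12 \<and> x12 \<le> r w \<and> (y 1 < y w \<and> y w < y 2 \<or> y 2 < y w \<and> y w < y 1))"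
    using assms(15) by blast
  have f120: "\<not> (l 0 \<le> x12 \<and> x12 \<le> r 0 \<and> (y 1 < y 0 \<and> y 0 < y 2 \<or> y 2 < y 0 \<and> y 0 < y 1))" using q12[rule_format, of 0] by simp
  have f123: "\<not> (l 3 \<le> x12 \<and> x12 \<le> r 3 \<and> (y 1 < y 3 \<and> y 3 < y 2 \<or> y 2 < y 3 \<and> y 3 < y 1))" using q12[rule_format, of 3] by simp
  have f124: "\<not> (l 4 \<le> x12 \<and> x12 \<le> r 4 \<and> (y 1 < y 4 \<and> y 4 < y 2 \<or> y 2 < y 4 \<and> y 4 < y 1))" using q12[rule_format, of 4] by simp
  obtain x13 where h13: "l 1 \<le> x13" "x13 \<le> r 1" "l 3 \<le> x13" "x13 \<le> r 3" and q13: "\<forall>w. w < 5 \<longrightarrow> w \<noteq> 1 \<longrightarrow> w \<noteq> 3 \<longrightarrow> \<not> (l w \<le> x13 \<and> x13 \<le> r w \<and> (y 1 < y w \<and> y w < y 3 \<or> y 3 < y w \<and> y w < y 1))"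
    using assms(16) by blast
  have f130: "\<not> (l 0 \<le> x13 \<and> x13 \<le> r 0 \<and> (y 1 < y 0 \<and> y 0 < y 3 \<or> y 3 < y 0 \<and> y 0 < y 1))" using q13[rule_format, of 0] by simp
  have f132: "\<not> (l 2 \<le> x13 \<and> x13 \<le> r 2 \<and> (y 1 < y 2 \<and> y 2 < y 3 \<or> y 3 < y 2 \<and> y 2 < y 1))" using q13[rule_format, of 2] by simp
  have f134: "\<not> (l 4 \<le> x13 \<and> x13 \<le> r 4 \<and> (y 1 < y 4 \<and> y 4 < y 3 \<or> y 3 < y 4 \<and> y 4 < y 1))" using q13[rule_format, of 4] by simp
  obtain x14 where h14: "l 1 \<le> x14" "x14 \<le> r 1" "l 4 \<le> x14" "x14 \<le> r 4" and q14: "\<forall>w. w < 5 \<longrightarrow> w \<noteq> 1 \<longrightarrow> w \<noteq> 4 \<longrightarrow> \<not> (l w \<le> x14 \<and> x14 \<le> r w \<and> (y 1 < y w \<and> y w < y 4 \<or> y 4 < y w \<and> y w < y 1))"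
    using assms(17) by blast
  have f140: "\<not> (l 0 \<le> x14 \<and> x14 \<le> r 0 \<and> (y 1 < y 0 \<and> y 0 < y 4 \<or> y 4 < y 0 \<and> y 0 < y 1))" using q14[rule_format, of 0] by simp
  have f142: "\<not> (l 2 \<le> x14 \<and> x14 \<le> r 2 \<and> (y 1 < y 2 \<and> y 2 < y 4 \<or> y 4 < y 2 \<and> y 2 < y 1))" using q14[rule_format, of 2] by simp
  have f143: "\<not> (l 3 \<le> x14 \<and> x14 \<le> r 3 \<and> (y 1 < y 3 \<and> y 3 < y 4 \<or> y 4 < y 3 \<and> y 3 < y 1))" using q14[rule_format, of 3] by simp
  obtain x23 where h23: "l 2 \<le> x23" "x23 \<le> r 2" "l 3 \<le> x23" "x23 \<le> r 3" and q23: "\<forall>w. w < 5 \<longrightarrow> w \<noteq> 2 \<longrightarrow> w \<noteq> 3 \<longrightarrow> \<not> (l w \<le> x23 \<and> x23 \<le> r w \<and> (y 2 < y w \<and> y w < y 3 \<or> y 3 < y w \<and> y w < y 2))"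
    using assms(18) by blast
  have f230: "\<not> (l 0 \<le> x23 \<and> x23 \<le> r 0 \<and> (y 2 < y 0 \<and> y 0 < y 3 \<or> y 3 < y 0 \<and> y 0 < y 2))" using q23[rule_format, of 0] by simp
  have f231: "\<not> (l 1 \<le> x23 \<and> x23 \<le> r 1 \<and> (y 2 < y 1 \<and> y 1 < y 3 \<or> y 3 < y 1 \<and> y 1 < y 2))" using q23[rule_format, of 1] by simp
  have f234: "\<not> (l 4 \<le> x23 \<and> x23 \<le> r 4 \<and> (y 2 < y 4 \<and> y 4 < y 3 \<or> y 3 < y 4 \<and> y 4 < y 2))" using q23[rule_format, of 4] by simp
  obtain x24 where h24: "l 2 \<le> x24" "x24 \<le> r 2" "l 4 \<le> x24" "x24 \<le> r 4" and q24: "\<forall>w. w < 5 \<longrightarrow> w \<noteq> 2 \<longrightarrow> w \<noteq> 4 \<longrightarrow> \<not> (l w \<le> x24 \<and> x24 \<le> r w \<and> (y 2 < y w \<and> y w < y 4 \<or> y 4 < y w \<and> y w < y 2))"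
    using assms(19) by blast
  have f240: "\<not> (l 0 \<le> x24 \<and> x24 \<le> r 0 \<and> (y 2 < y 0 \<and> y 0 < y 4 \<or> y 4 < y 0 \<and> y 0 < y 2))" using q24[rule_format, of 0] by simp
  have f241: "\<not> (l 1 \<le> x24 \<and> x24 \<le> r 1 \<and> (y 2 < y 1 \<and> y 1 < y 4 \<or> y 4 < y 1 \<and> y 1 < y 2))" using q24[rule_format, of 1] by simp
  have f243: "\<not> (l 3 \<le> x24 \<and> x24 \<le> r 3 \<and> (y 2 < y 3 \<and> y 3 < y 4 \<or> y 4 < y 3 \<and> y 3 < y 2))" using q24[rule_format, of 3] by simp
  obtain x34 where h34: "l 3 \<le> x34" "x34 \<le> r 3" "l 4 \<le> x34" "x34 \<le> r 4" and q34: "\<forall>w. w < 5 \<longrightarrow> w \<noteq> 3 \<longrightarrow> w \<noteq> 4 \<longrightarrow> \<not> (l w \<le> x34 \<and> x34 \<le> r w \<and> (y 3 < y w \<and> y w < y 4 \<or> y 4 < y w \<and> y w < y 3))"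
    using assms(20) by blast
  have f340: "\<not> (l 0 \<le> x34 \<and> x34 \<le> r 0 \<and> (y 3 < y 0 \<and> y 0 < y 4 \<or> y 4 < y 0 \<and> y 0 < y 3))" using q34[rule_format, of 0] by simp
  have f341: "\<not> (l 1 \<le> x34 \<and> x34 \<le> r 1 \<and> (y 3 < y 1 \<and> y 1 < y 4 \<or> y 4 < y 1 \<and> y 1 < y 3))" using q34[rule_format, of 1] by simp
  have f342: "\<not> (l 2 \<le> x34 \<and> x34 \<le> r 2 \<and> (y 3 < y 2 \<and> y 2 < y 4 \<or> y 4 < y 2 \<and> y 2 < y 3))" using q34[rule_format, of 2] by simp
  show False using assms(1-10) h01 f012 f013 f014 h02 f021 f023 f024 h03 f031 f032 f034 h04 f041 f042 f043 h12 f120 f123 f124 h13 f130 f132 f134 h14 f140 f142 f143 h23 f230 f231 f234 h24 f240 f241 f243 h34 f340 f341 f342 by smt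
qed

definition betw :: "real \<Rightarrow> real \<Rightarrow> real \<Rightarrow> bool" where "betw a y b = (a \<le> y \<and> y \<le> b \<or> b \<le> y \<and> y \<le> a)"

lemma C4flat:
  fixes l r y :: "nat \<Rightarrow> real"
  assumes o: "\<exists>x. l 0 \<le> x \<and> x \<le> r 0 \<and> l 1 \<le> x \<and> x \<le> r 1"
     "\<exists>x. l 1 \<le> x \<and> x \<le> r 1 \<and> l 2 \<le> x \<and> x \<le> r 2"
     "\<exists>x. l 2 \<le> x \<and> x \<le> r 2 \<and> l 3 \<le> x \<and> x \<le> r 3"
     "\<exists>x. l 3 \<le> x \<and> x \<le> r 3 \<and> l 0 \<le> x \<and> x \<le> r 0"
  and n02: "\<And>x. l 0 \<le> x \<Longrightarrow> x \<le> r 0 \<Longrightarrow> l 2 \<le> x \<Longrightarrow> x \<le> r 2 \<Longrightarrow>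
      l 1 \<le> x \<and> x \<le> r 1 \<and> betw (y 0) (y 1) (y 2) \<and> l 3 \<le> x \<and> x \<le> r 3 \<and> betw (y 0) (y 3) (y 2)"
  and n13: "\<And>x. l 1 \<le> x \<Longrightarrow> x \<le> r 1 \<Longrightarrow> l 3 \<le> x \<Longrightarrow> x \<le> r 3 \<Longrightarrow>
      l 0 \<le> x \<and> x \<le> r 0 \<and> betw (y 1) (y 0) (y 3) \<and> l 2 \<le> x \<and> x \<le> r 2 \<and> betw (y 1) (y 2) (y 3)"
  and d: "\<And>x u v. u < 4 \<Longrightarrow> v < 4 \<Longrightarrow> u \<noteq> v \<Longrightarrow> l u \<le> x \<Longrightarrow> x \<le> r u \<Longrightarrow> l v \<le> x \<Longrightarrow> x \<le> r v \<Longrightarrow> y u \<noteq> y v"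
  shows False
proof -
  have A: "\<not> (l 0 \<le> x \<and> x \<le> r 0 \<and> l 2 \<le> x \<and> x \<le> r 2)" for x
  proof
    assume h: "l 0 \<le> x \<and> x \<le> r 0 \<and> l 2 \<le> x \<and> x \<le> r 2"
    have a: "l 1 \<le> x \<and> x \<le> r 1 \<and> betw (y 0) (y 1) (y 2) \<and> l 3 \<le> x \<and> x \<le> r 3 \<and> betw (y 0) (y 3) (y 2)" using n02 h by blast
    have b: "betw (y 1) (y 0) (y 3) \<and> betw (y 1) (y 2) (y 3)" using n13 a by blast
    have "y 0 \<noteq> y 1" "y 0 \<noteq> y 3" using d[of 0 1 x] d[of 0 3 x] h a by auto
    thus False using a b unfolding betw_def by linarith
  qed
  have B: "\<not> (l 1 \<le> x \<and> x \<le> r 1 \<and> l 3 \<le> x \<and> x \<le> r 3)" for x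
    using A n13 by blast
  show False using o A[of "l 0"] A[of "l 2"] B[of "r 0"] B[of "r 2"] by smt
qed


lemma valid_ang: "0 < \<rho> \<Longrightarrow> a < b \<Longrightarrow> b < a + 24 \<Longrightarrow> valid_arc (\<rho>, ang a, ang b)"
  unfolding valid_arc_def ang_def
  using mult_strict_left_mono[of b "a+24" pi] pi_gt_zero by (simp add: divide_strict_right_mono field_simps)

lemma coll_arcs:
  assumes "0 < \<rho>1" "0 < \<rho>2" "p \<in> arc_points (\<rho>1, ang a1, ang b1)" "q \<in> arc_points (\<rho>2, ang a2, ang b2)" "collinear {0, p, q}"
  shows "\<exists>s s' k. a1 \<le> s \<and> s \<le> b1 \<and> a2 \<le> s' \<and> s' \<le> b2 \<and> (s' = s + 24 * of_int k \<or> s' = s + 12 + 24 * of_int k)"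
proof -
  obtain s where s: "a1 \<le> s" "s \<le> b1" "p = complex_of_real \<rho>1 * cis (ang s)" using arc_pt[OF assms(3)] by blast
  obtain s2 where s2: "q = complex_of_real \<rho>2 * cis (ang s2)" using arc_pt[OF assms(4)] by blast
  have "p \<noteq> 0" using s(3) assms(1) by simp
  moreover have "q \<noteq> 0" using s2 assms(2) by simp
  ultimately obtain c where c: "q = c *\<^sub>R p" using assms(5) unfolding collinear_lemma by blast
  have "q = complex_of_real (c * \<rho>1) * cis (ang s)" using c s(3) by (simp add: scaleR_conv_of_real)
  hence "complex_of_real (c * \<rho>1) * cis (ang s) \<in> arc_points (\<rho>2, ang a2, ang b2)" using assms(4) by simp
  from line_arc[OF assms(2) this] obtain s' k where "a2 \<le> s'" "s' \<le> b2"
    "(c * \<rho>1 = \<rho>2 \<and> s' = s + 24 * of_int k) \<or> (c * \<rho>1 = -\<rho>2 \<and> s' = s + 12 + 24 * of_int k)" by blast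
  thus ?thesis using s(1,2) by blast
qed

lemma no_coll:
  assumes "0 < rx" "0 < ry"
   and "\<And>s s' k. ax \<le> s \<Longrightarrow> s \<le> bx \<Longrightarrow> ay \<le> s' \<Longrightarrow> s' \<le> bby \<Longrightarrow>
        real_of_int k \<le> -2 \<or> real_of_int k = -1 \<or> real_of_int k = 0 \<or> real_of_int k = 1 \<or> 2 \<le> real_of_int k \<Longrightarrow> s' \<noteq> s + 24 * of_int k \<and> s' \<noteq> s + 12 + 24 * of_int k"
   and "A u = (rx, ang ax, ang bx)" "A v = (ry, ang ay, ang bby)"
  shows "\<not> arc_k_visible k' V A u v"
proof
  assume "arc_k_visible k' V A u v"
  then obtain p q where pq: "p \<in> arc_points (A u)" "q \<in> arc_points (A v)" "collinear {0, p, q}" unfolding arc_k_visible_def by blast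
  obtain s s' k where sk: "ax \<le> s" "s \<le> bx" "ay \<le> s'" "s' \<le> bby" "s' = s + 24 * of_int k \<or> s' = s + 12 + 24 * of_int k"
    using coll_arcs[OF assms(1,2) pq(1)[unfolded assms(4)] pq(2)[unfolded assms(5)] pq(3)] by blast
  have "real_of_int k \<le> -2 \<or> real_of_int k = -1 \<or> real_of_int k = 0 \<or> real_of_int k = 1 \<or> 2 \<le> real_of_int k"
    using int5[of k] by (elim disjE) simp_all
  from assms(3)[OF sk(1-4) this] sk(5) show False by blast
qed

lemma two_in: "finite S \<Longrightarrow> S \<subseteq> {a,b} \<Longrightarrow> 2 \<le> card S \<Longrightarrow> a \<in> S \<and> b \<in> S"
proof (rule ccontr)
  assume h: "finite S" "S \<subseteq> {a,b}" "2 \<le> card S" "\<not> (a \<in> S \<and> b \<in> S)"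
  hence "S \<subseteq> {a} \<or> S \<subseteq> {b}" by blast
  hence "card S \<le> 1" using card_mono[of "{a}" S] card_mono[of "{b}" S] by auto
  thus False using h(3) by simp
qed

lemma nat5: "(v::nat) < 5 \<Longrightarrow> v = 0 \<or> v = 1 \<or> v = 2 \<or> v = 3 \<or> v = 4" by arith
lemma nat4: "(v::nat) < 4 \<Longrightarrow> v = 0 \<or> v = 1 \<or> v = 2 \<or> v = 3" by arith

definition A5 :: "nat \<Rightarrow> real \<times> real \<times> real" where
  "A5 w = (if w = 0 then (2, ang 6, ang 20) else if w = 1 then (1, ang 4, ang 8) else if w = 2 then (1, ang 10, ang 18) else if w = 3 then (1, ang 19, ang 26) else (4, ang 12, ang 32))"

lemma A5s: "A5 0 = (2, ang 6, ang 20)" "A5 1 = (1, ang 4, ang 8)" "A5 2 = (1, ang 10, ang 18)" "A5 3 = (1, ang 19, ang 26)" "A5 4 = (4, ang 12, ang 32)"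
  by (simp_all add: A5_def)

lemma K5_01: "arc_k_visible k {..<5} A5 0 1"
proof (rule vis_wit[where pa="2" and pb="1" and \<theta>="ang 7"])
  show "complex_of_real 2 * cis (ang 7) \<in> arc_points (A5 0)" unfolding A5s by (rule on_arc[where m=0]) simp
  show "complex_of_real 1 * cis (ang 7) \<in> arc_points (A5 1)" unfolding A5s by (rule on_arc[where m=0]) simp
  fix w assume "w \<in> {..<5::nat} - {0,1}"
  hence "w = 2 \<or> w = 3 \<or> w = 4" by auto
  thus "arc_points (A5 w) \<inter> closed_segment (complex_of_real 2 * cis (ang 7)) (complex_of_real 1 * cis (ang 7)) = {}"
    apply - apply (elim disjE) apply (simp_all only: A5s) by (rule no_hit; (auto, (elim disjE; linarith)?))+
qed simp_all

lemma K5_02: "arc_k_visible k {..<5} A5 0 2"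
proof (rule vis_wit[where pa="2" and pb="1" and \<theta>="ang 11"])
  show "complex_of_real 2 * cis (ang 11) \<in> arc_points (A5 0)" unfolding A5s by (rule on_arc[where m=0]) simp
  show "complex_of_real 1 * cis (ang 11) \<in> arc_points (A5 2)" unfolding A5s by (rule on_arc[where m=0]) simp
  fix w assume "w \<in> {..<5::nat} - {0,2}"
  hence "w = 1 \<or> w = 3 \<or> w = 4" by auto
  thus "arc_points (A5 w) \<inter> closed_segment (complex_of_real 2 * cis (ang 11)) (complex_of_real 1 * cis (ang 11)) = {}"
    apply - apply (elim disjE) apply (simp_all only: A5s) by (rule no_hit; (auto, (elim disjE; linarith)?))+
qed simp_all

lemma K5_03: "arc_k_visible k {..<5} A5 0 3"
proof (rule vis_wit[where pa="2" and pb="(-1)" and \<theta>="ang 9"])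
  show "complex_of_real 2 * cis (ang 9) \<in> arc_points (A5 0)" unfolding A5s by (rule on_arc[where m=0]) simp
  show "complex_of_real (-1) * cis (ang 9) \<in> arc_points (A5 3)" unfolding A5s by (rule on_arc[where m=0]) simp
  fix w assume "w \<in> {..<5::nat} - {0,3}"
  hence "w = 1 \<or> w = 2 \<or> w = 4" by auto
  thus "arc_points (A5 w) \<inter> closed_segment (complex_of_real 2 * cis (ang 9)) (complex_of_real (-1) * cis (ang 9)) = {}"
    apply - apply (elim disjE) apply (simp_all only: A5s) by (rule no_hit; (auto, (elim disjE; linarith)?))+
qed simp_all

lemma K5_04: "arc_k_visible k {..<5} A5 0 4"
proof (rule vis_wit[where pa="2" and pb="4" and \<theta>="ang 7"])
  show "complex_of_real 2 * cis (ang 7) \<in> arc_points (A5 0)" unfolding A5s by (rule on_arc[where m=0]) simp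
  show "complex_of_real 4 * cis (ang 7) \<in> arc_points (A5 4)" unfolding A5s by (rule on_arc[where m=1]) simp
  fix w assume "w \<in> {..<5::nat} - {0,4}"
  hence "w = 1 \<or> w = 2 \<or> w = 3" by auto
  thus "arc_points (A5 w) \<inter> closed_segment (complex_of_real 2 * cis (ang 7)) (complex_of_real 4 * cis (ang 7)) = {}"
    apply - apply (elim disjE) apply (simp_all only: A5s) by (rule no_hit; (auto, (elim disjE; linarith)?))+
qed simp_all

lemma K5_12: "arc_k_visible k {..<5} A5 1 2"
proof (rule vis_wit[where pa="1" and pb="(-1)" and \<theta>="ang 5"])
  show "complex_of_real 1 * cis (ang 5) \<in> arc_points (A5 1)" unfolding A5s by (rule on_arc[where m=0]) simp
  show "complex_of_real (-1) * cis (ang 5) \<in> arc_points (A5 2)" unfolding A5s by (rule on_arc[where m=0]) simp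
  fix w assume "w \<in> {..<5::nat} - {1,2}"
  hence "w = 0 \<or> w = 3 \<or> w = 4" by auto
  thus "arc_points (A5 w) \<inter> closed_segment (complex_of_real 1 * cis (ang 5)) (complex_of_real (-1) * cis (ang 5)) = {}"
    apply - apply (elim disjE) apply (simp_all only: A5s) by (rule no_hit; (auto, (elim disjE; linarith)?))+
qed simp_all

lemma K5_13: "arc_k_visible k {..<5} A5 1 3"
proof (rule vis_wit[where pa="1" and pb="(-1)" and \<theta>="ang (15/2)"])
  show "complex_of_real 1 * cis (ang (15/2)) \<in> arc_points (A5 1)" unfolding A5s by (rule on_arc[where m=0]) simp
  show "complex_of_real (-1) * cis (ang (15/2)) \<in> arc_points (A5 3)" unfolding A5s by (rule on_arc[where m=0]) simp
  fix w assume "w \<in> {..<5::nat} - {1,3}"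
  hence "w = 0 \<or> w = 2 \<or> w = 4" by auto
  thus "arc_points (A5 w) \<inter> closed_segment (complex_of_real 1 * cis (ang (15/2))) (complex_of_real (-1) * cis (ang (15/2))) = {}"
    apply - apply (elim disjE) apply (simp_all only: A5s) by (rule no_hit; (auto, (elim disjE; linarith)?))+
qed simp_all

lemma K5_14: "arc_k_visible k {..<5} A5 1 4"
proof (rule vis_wit[where pa="1" and pb="4" and \<theta>="ang 5"])
  show "complex_of_real 1 * cis (ang 5) \<in> arc_points (A5 1)" unfolding A5s by (rule on_arc[where m=0]) simp
  show "complex_of_real 4 * cis (ang 5) \<in> arc_points (A5 4)" unfolding A5s by (rule on_arc[where m=1]) simp
  fix w assume "w \<in> {..<5::nat} - {1,4}"
  hence "w = 0 \<or> w = 2 \<or> w = 3" by auto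
  thus "arc_points (A5 w) \<inter> closed_segment (complex_of_real 1 * cis (ang 5)) (complex_of_real 4 * cis (ang 5)) = {}"
    apply - apply (elim disjE) apply (simp_all only: A5s) by (rule no_hit; (auto, (elim disjE; linarith)?))+
qed simp_all

lemma K5_23: "arc_k_visible k {..<5} A5 2 3"
proof (rule vis_wit[where pa="1" and pb="(-1)" and \<theta>="ang 11"])
  show "complex_of_real 1 * cis (ang 11) \<in> arc_points (A5 2)" unfolding A5s by (rule on_arc[where m=0]) simp
  show "complex_of_real (-1) * cis (ang 11) \<in> arc_points (A5 3)" unfolding A5s by (rule on_arc[where m=0]) simp
  fix w assume "w \<in> {..<5::nat} - {2,3}"
  hence "w = 0 \<or> w = 1 \<or> w = 4" by auto
  thus "arc_points (A5 w) \<inter> closed_segment (complex_of_real 1 * cis (ang 11)) (complex_of_real (-1) * cis (ang 11)) = {}"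
    apply - apply (elim disjE) apply (simp_all only: A5s) by (rule no_hit; (auto, (elim disjE; linarith)?))+
qed simp_all

lemma K5_24: "arc_k_visible k {..<5} A5 2 4"
proof (rule vis_wit[where pa="1" and pb="(-4)" and \<theta>="ang 15"])
  show "complex_of_real 1 * cis (ang 15) \<in> arc_points (A5 2)" unfolding A5s by (rule on_arc[where m=0]) simp
  show "complex_of_real (-4) * cis (ang 15) \<in> arc_points (A5 4)" unfolding A5s by (rule on_arc[where m=0]) simp
  fix w assume "w \<in> {..<5::nat} - {2,4}"
  hence "w = 0 \<or> w = 1 \<or> w = 3" by auto
  thus "arc_points (A5 w) \<inter> closed_segment (complex_of_real 1 * cis (ang 15)) (complex_of_real (-4) * cis (ang 15)) = {}"
    apply - apply (elim disjE) apply (simp_all only: A5s) by (rule no_hit; (auto, (elim disjE; linarith)?))+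
qed simp_all

lemma K5_34: "arc_k_visible k {..<5} A5 3 4"
proof (rule vis_wit[where pa="1" and pb="4" and \<theta>="ang 25"])
  show "complex_of_real 1 * cis (ang 25) \<in> arc_points (A5 3)" unfolding A5s by (rule on_arc[where m=0]) simp
  show "complex_of_real 4 * cis (ang 25) \<in> arc_points (A5 4)" unfolding A5s by (rule on_arc[where m=0]) simp
  fix w assume "w \<in> {..<5::nat} - {3,4}"
  hence "w = 0 \<or> w = 1 \<or> w = 2" by auto
  thus "arc_points (A5 w) \<inter> closed_segment (complex_of_real 1 * cis (ang 25)) (complex_of_real 4 * cis (ang 25)) = {}"
    apply - apply (elim disjE) apply (simp_all only: A5s) by (rule no_hit; (auto, (elim disjE; linarith)?))+
qed simp_all

definition A4 :: "nat \<Rightarrow> real \<times> real \<times> real" where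
  "A4 w = (if w = 0 then (1, ang 1, ang 5) else if w = 1 then (2, ang 4, ang 8) else if w = 2 then (3, ang 7, ang 10) else (4, ang 9, ang 15))"

lemma A4s: "A4 0 = (1, ang 1, ang 5)" "A4 1 = (2, ang 4, ang 8)" "A4 2 = (3, ang 7, ang 10)" "A4 3 = (4, ang 9, ang 15)"
  by (simp_all add: A4_def)

lemma C4_01: "arc_k_visible k {..<4} A4 0 1"
proof (rule vis_wit[where pa="1" and pb="2" and \<theta>="ang (9/2)"])
  show "complex_of_real 1 * cis (ang (9/2)) \<in> arc_points (A4 0)" unfolding A4s by (rule on_arc[where m=0]) simp
  show "complex_of_real 2 * cis (ang (9/2)) \<in> arc_points (A4 1)" unfolding A4s by (rule on_arc[where m=0]) simp
  fix w assume "w \<in> {..<4::nat} - {0,1}"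
  hence "w = 2 \<or> w = 3" by auto
  thus "arc_points (A4 w) \<inter> closed_segment (complex_of_real 1 * cis (ang (9/2))) (complex_of_real 2 * cis (ang (9/2))) = {}"
    apply - apply (elim disjE) apply (simp_all only: A4s) by (rule no_hit; (auto, (elim disjE; linarith)?))+
qed simp_all

lemma C4_12: "arc_k_visible k {..<4} A4 1 2"
proof (rule vis_wit[where pa="2" and pb="3" and \<theta>="ang (15/2)"])
  show "complex_of_real 2 * cis (ang (15/2)) \<in> arc_points (A4 1)" unfolding A4s by (rule on_arc[where m=0]) simp
  show "complex_of_real 3 * cis (ang (15/2)) \<in> arc_points (A4 2)" unfolding A4s by (rule on_arc[where m=0]) simp
  fix w assume "w \<in> {..<4::nat} - {1,2}"
  hence "w = 0 \<or> w = 3" by auto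
  thus "arc_points (A4 w) \<inter> closed_segment (complex_of_real 2 * cis (ang (15/2))) (complex_of_real 3 * cis (ang (15/2))) = {}"
    apply - apply (elim disjE) apply (simp_all only: A4s) by (rule no_hit; (auto, (elim disjE; linarith)?))+
qed simp_all

lemma C4_23: "arc_k_visible k {..<4} A4 2 3"
proof (rule vis_wit[where pa="3" and pb="4" and \<theta>="ang (19/2)"])
  show "complex_of_real 3 * cis (ang (19/2)) \<in> arc_points (A4 2)" unfolding A4s by (rule on_arc[where m=0]) simp
  show "complex_of_real 4 * cis (ang (19/2)) \<in> arc_points (A4 3)" unfolding A4s by (rule on_arc[where m=0]) simp
  fix w assume "w \<in> {..<4::nat} - {2,3}"
  hence "w = 0 \<or> w = 1" by auto
  thus "arc_points (A4 w) \<inter> closed_segment (complex_of_real 3 * cis (ang (19/2))) (complex_of_real 4 * cis (ang (19/2))) = {}"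
    apply - apply (elim disjE) apply (simp_all only: A4s) by (rule no_hit; (auto, (elim disjE; linarith)?))+
qed simp_all

lemma C4_03: "arc_k_visible k {..<4} A4 0 3"
proof (rule vis_wit[where pa="1" and pb="(-4)" and \<theta>="ang 2"])
  show "complex_of_real 1 * cis (ang 2) \<in> arc_points (A4 0)" unfolding A4s by (rule on_arc[where m=0]) simp
  show "complex_of_real (-4) * cis (ang 2) \<in> arc_points (A4 3)" unfolding A4s by (rule on_arc[where m=0]) simp
  fix w assume "w \<in> {..<4::nat} - {0,3}"
  hence "w = 1 \<or> w = 2" by auto
  thus "arc_points (A4 w) \<inter> closed_segment (complex_of_real 1 * cis (ang 2)) (complex_of_real (-4) * cis (ang 2)) = {}"
    apply - apply (elim disjE) apply (simp_all only: A4s) by (rule no_hit; (auto, (elim disjE; linarith)?))+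
qed simp_all

lemma C4_02: "\<not> arc_k_visible k {..<4} A4 0 2"
  by (rule no_coll[where rx=1 and ry=3 and ax=1 and bx=5 and ay=7 and bby=10]) (auto simp: A4s A4_def, (elim disjE; linarith)?)
lemma C4_13: "\<not> arc_k_visible k {..<4} A4 1 3"
  by (rule no_coll[where rx=2 and ry=4 and ax=4 and bx=8 and ay=9 and bby=15]) (auto simp: A4s A4_def, (elim disjE; linarith)?)

lemma A5_d01: "arc_points (A5 0) \<inter> arc_points (A5 1) = {}"
  unfolding A5s by (rule arc_disj; (auto, (elim disjE; linarith)?))
lemma A5_d02: "arc_points (A5 0) \<inter> arc_points (A5 2) = {}"
  unfolding A5s by (rule arc_disj; (auto, (elim disjE; linarith)?))
lemma A5_d03: "arc_points (A5 0) \<inter> arc_points (A5 3) = {}"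
  unfolding A5s by (rule arc_disj; (auto, (elim disjE; linarith)?))
lemma A5_d04: "arc_points (A5 0) \<inter> arc_points (A5 4) = {}"
  unfolding A5s by (rule arc_disj; (auto, (elim disjE; linarith)?))
lemma A5_d10: "arc_points (A5 1) \<inter> arc_points (A5 0) = {}"
  unfolding A5s by (rule arc_disj; (auto, (elim disjE; linarith)?))
lemma A5_d12: "arc_points (A5 1) \<inter> arc_points (A5 2) = {}"
  unfolding A5s by (rule arc_disj; (auto, (elim disjE; linarith)?))
lemma A5_d13: "arc_points (A5 1) \<inter> arc_points (A5 3) = {}"
  unfolding A5s by (rule arc_disj; (auto, (elim disjE; linarith)?))
lemma A5_d14: "arc_points (A5 1) \<inter> arc_points (A5 4) = {}"
  unfolding A5s by (rule arc_disj; (auto, (elim disjE; linarith)?))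
lemma A5_d20: "arc_points (A5 2) \<inter> arc_points (A5 0) = {}"
  unfolding A5s by (rule arc_disj; (auto, (elim disjE; linarith)?))
lemma A5_d21: "arc_points (A5 2) \<inter> arc_points (A5 1) = {}"
  unfolding A5s by (rule arc_disj; (auto, (elim disjE; linarith)?))
lemma A5_d23: "arc_points (A5 2) \<inter> arc_points (A5 3) = {}"
  unfolding A5s by (rule arc_disj; (auto, (elim disjE; linarith)?))
lemma A5_d24: "arc_points (A5 2) \<inter> arc_points (A5 4) = {}"
  unfolding A5s by (rule arc_disj; (auto, (elim disjE; linarith)?))
lemma A5_d30: "arc_points (A5 3) \<inter> arc_points (A5 0) = {}"
  unfolding A5s by (rule arc_disj; (auto, (elim disjE; linarith)?))
lemma A5_d31: "arc_points (A5 3) \<inter> arc_points (A5 1) = {}"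
  unfolding A5s by (rule arc_disj; (auto, (elim disjE; linarith)?))
lemma A5_d32: "arc_points (A5 3) \<inter> arc_points (A5 2) = {}"
  unfolding A5s by (rule arc_disj; (auto, (elim disjE; linarith)?))
lemma A5_d34: "arc_points (A5 3) \<inter> arc_points (A5 4) = {}"
  unfolding A5s by (rule arc_disj; (auto, (elim disjE; linarith)?))
lemma A5_d40: "arc_points (A5 4) \<inter> arc_points (A5 0) = {}"
  unfolding A5s by (rule arc_disj; (auto, (elim disjE; linarith)?))
lemma A5_d41: "arc_points (A5 4) \<inter> arc_points (A5 1) = {}"
  unfolding A5s by (rule arc_disj; (auto, (elim disjE; linarith)?))
lemma A5_d42: "arc_points (A5 4) \<inter> arc_points (A5 2) = {}"
  unfolding A5s by (rule arc_disj; (auto, (elim disjE; linarith)?))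
lemma A5_d43: "arc_points (A5 4) \<inter> arc_points (A5 3) = {}"
  unfolding A5s by (rule arc_disj; (auto, (elim disjE; linarith)?))
lemma A5_disj: "pairwise_disjoint_on {..<5} (\<lambda>v. arc_points (A5 v))"
  unfolding pairwise_disjoint_on_def lessThan_iff
proof (intro ballI impI)
  fix u v :: nat assume a: "u \<in> {..<5}" "v \<in> {..<5}" "u \<noteq> v"
  thus "arc_points (A5 u) \<inter> arc_points (A5 v) = {}"
    using nat5[OF a(1)[unfolded lessThan_iff]] nat5[OF a(2)[unfolded lessThan_iff]] a(3) by (elim disjE) (simp_all add: A5_d01 A5_d01[unfolded One_nat_def] A5_d02 A5_d02[unfolded One_nat_def] A5_d03 A5_d03[unfolded One_nat_def] A5_d04 A5_d04[unfolded One_nat_def] A5_d10 A5_d10[unfolded One_nat_def] A5_d12 A5_d12[unfolded One_nat_def] A5_d13 A5_d13[unfolded One_nat_def] A5_d14 A5_d14[unfolded One_nat_def] A5_d20 A5_d20[unfolded One_nat_def] A5_d21 A5_d21[unfolded One_nat_def] A5_d23 A5_d23[unfolded One_nat_def] A5_d24 A5_d24[unfolded One_nat_def] A5_d30 A5_d30[unfolded One_nat_def] A5_d31 A5_d31[unfolded One_nat_def] A5_d32 A5_d32[unfolded One_nat_def] A5_d34 A5_d34[unfolded One_nat_def] A5_d40 A5_d40[unfolded One_nat_def] A5_d41 A5_d41[unfolded One_nat_def] A5_d42 A5_d42[unfolded One_nat_def] A5_d43 A5_d43[unfolded One_nat_def])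
qed

lemma A5_valid: "\<forall>v\<in>{..<5}. valid_arc (A5 v)"
proof
  fix v assume "v \<in> {..<5::nat}"
  hence "v = 0 \<or> v = 1 \<or> v = 2 \<or> v = 3 \<or> v = 4" by auto
  thus "valid_arc (A5 v)" apply - apply (elim disjE) apply (simp_all only: A5s) by (rule valid_ang; simp)+
qed

lemma A4_d01: "arc_points (A4 0) \<inter> arc_points (A4 1) = {}"
  unfolding A4s by (rule arc_disj; (auto, (elim disjE; linarith)?))
lemma A4_d02: "arc_points (A4 0) \<inter> arc_points (A4 2) = {}"
  unfolding A4s by (rule arc_disj; (auto, (elim disjE; linarith)?))
lemma A4_d03: "arc_points (A4 0) \<inter> arc_points (A4 3) = {}"
  unfolding A4s by (rule arc_disj; (auto, (elim disjE; linarith)?))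
lemma A4_d10: "arc_points (A4 1) \<inter> arc_points (A4 0) = {}"
  unfolding A4s by (rule arc_disj; (auto, (elim disjE; linarith)?))
lemma A4_d12: "arc_points (A4 1) \<inter> arc_points (A4 2) = {}"
  unfolding A4s by (rule arc_disj; (auto, (elim disjE; linarith)?))
lemma A4_d13: "arc_points (A4 1) \<inter> arc_points (A4 3) = {}"
  unfolding A4s by (rule arc_disj; (auto, (elim disjE; linarith)?))
lemma A4_d20: "arc_points (A4 2) \<inter> arc_points (A4 0) = {}"
  unfolding A4s by (rule arc_disj; (auto, (elim disjE; linarith)?))
lemma A4_d21: "arc_points (A4 2) \<inter> arc_points (A4 1) = {}"
  unfolding A4s by (rule arc_disj; (auto, (elim disjE; linarith)?))
lemma A4_d23: "arc_points (A4 2) \<inter> arc_points (A4 3) = {}"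
  unfolding A4s by (rule arc_disj; (auto, (elim disjE; linarith)?))
lemma A4_d30: "arc_points (A4 3) \<inter> arc_points (A4 0) = {}"
  unfolding A4s by (rule arc_disj; (auto, (elim disjE; linarith)?))
lemma A4_d31: "arc_points (A4 3) \<inter> arc_points (A4 1) = {}"
  unfolding A4s by (rule arc_disj; (auto, (elim disjE; linarith)?))
lemma A4_d32: "arc_points (A4 3) \<inter> arc_points (A4 2) = {}"
  unfolding A4s by (rule arc_disj; (auto, (elim disjE; linarith)?))
lemma A4_disj: "pairwise_disjoint_on {..<4} (\<lambda>v. arc_points (A4 v))"
  unfolding pairwise_disjoint_on_def lessThan_iff
proof (intro ballI impI)
  fix u v :: nat assume a: "u \<in> {..<4}" "v \<in> {..<4}" "u \<noteq> v"
  thus "arc_points (A4 u) \<inter> arc_points (A4 v) = {}"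
    using nat4[OF a(1)[unfolded lessThan_iff]] nat4[OF a(2)[unfolded lessThan_iff]] a(3) by (elim disjE) (simp_all add: A4_d01 A4_d01[unfolded One_nat_def] A4_d02 A4_d02[unfolded One_nat_def] A4_d03 A4_d03[unfolded One_nat_def] A4_d10 A4_d10[unfolded One_nat_def] A4_d12 A4_d12[unfolded One_nat_def] A4_d13 A4_d13[unfolded One_nat_def] A4_d20 A4_d20[unfolded One_nat_def] A4_d21 A4_d21[unfolded One_nat_def] A4_d23 A4_d23[unfolded One_nat_def] A4_d30 A4_d30[unfolded One_nat_def] A4_d31 A4_d31[unfolded One_nat_def] A4_d32 A4_d32[unfolded One_nat_def])
qed

lemma A4_valid: "\<forall>v\<in>{..<4}. valid_arc (A4 v)"
proof
  fix v assume "v \<in> {..<4::nat}"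
  hence "v = 0 \<or> v = 1 \<or> v = 2 \<or> v = 3" by auto
  thus "valid_arc (A4 v)" apply - apply (elim disjE) apply (simp_all only: A4s) by (rule valid_ang; simp)+
qed

lemma K5_vis: assumes "u < 5" "v < 5" "u \<noteq> v" shows "arc_k_visible k {..<5} A5 u v"
  using nat5[OF assms(1)] nat5[OF assms(2)] assms(3) by (elim disjE) (simp_all add: K5_01 arc_vis_sym[OF K5_01] K5_01[unfolded One_nat_def] arc_vis_sym[OF K5_01, unfolded One_nat_def] K5_02 arc_vis_sym[OF K5_02] K5_02[unfolded One_nat_def] arc_vis_sym[OF K5_02, unfolded One_nat_def] K5_03 arc_vis_sym[OF K5_03] K5_03[unfolded One_nat_def] arc_vis_sym[OF K5_03, unfolded One_nat_def] K5_04 arc_vis_sym[OF K5_04] K5_04[unfolded One_nat_def] arc_vis_sym[OF K5_04, unfolded One_nat_def] K5_12 arc_vis_sym[OF K5_12] K5_12[unfolded One_nat_def] arc_vis_sym[OF K5_12, unfolded One_nat_def] K5_13 arc_vis_sym[OF K5_13] K5_13[unfolded One_nat_def] arc_vis_sym[OF K5_13, unfolded One_nat_def] K5_14 arc_vis_sym[OF K5_14] K5_14[unfolded One_nat_def] arc_vis_sym[OF K5_14, unfolded One_nat_def] K5_23 arc_vis_sym[OF K5_23] K5_23[unfolded One_nat_def] arc_vis_sym[OF K5_23, unfolded One_nat_def] K5_24 arc_vis_sym[OF K5_24] K5_24[unfolded One_nat_def] arc_vis_sym[OF K5_24, unfolded One_nat_def] K5_34 arc_vis_sym[OF K5_34]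 K5_34[unfolded One_nat_def] arc_vis_sym[OF K5_34, unfolded One_nat_def])

lemma K5_arc: "arc_k_vis_graph j {..<5} (\<lambda>u v. u < 5 \<and> v < 5 \<and> u \<noteq> v)"
  unfolding arc_k_vis_graph_def
  using A5_valid A5_disj K5_vis by (intro conjI exI[of _ A5]) auto

definition E4 :: "nat \<Rightarrow> nat \<Rightarrow> bool" where
  "E4 u v = (u < 4 \<and> v < 4 \<and> (u = v + 1 \<or> v = u + 1 \<or> (u = 0 \<and> v = 3) \<or> (u = 3 \<and> v = 0)))"

lemma C4_20: "\<not> arc_k_visible k {..<4} A4 2 0" using arc_vis_sym C4_02 by blast
lemma C4_31: "\<not> arc_k_visible k {..<4} A4 3 1" using arc_vis_sym C4_13 by blast

lemma C4_vis: "E4 u v \<longleftrightarrow> u \<in> {..<4} \<and> v \<in> {..<4} \<and> u \<noteq> v \<and> arc_k_visible k {..<4} A4 u v"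
proof (cases "u < 4 \<and> v < 4")
  case True
  hence "u = 0 \<or> u = 1 \<or> u = 2 \<or> u = 3" "v = 0 \<or> v = 1 \<or> v = 2 \<or> v = 3" by auto
  thus ?thesis by (elim disjE) (simp_all add: E4_def C4_01 C4_01[unfolded One_nat_def] C4_12 C4_12[unfolded One_nat_def] C4_23 C4_23[unfolded One_nat_def] C4_03 C4_03[unfolded One_nat_def] arc_vis_sym[OF C4_01] arc_vis_sym[OF C4_01, unfolded One_nat_def] arc_vis_sym[OF C4_12] arc_vis_sym[OF C4_12, unfolded One_nat_def] arc_vis_sym[OF C4_23] arc_vis_sym[OF C4_23, unfolded One_nat_def] arc_vis_sym[OF C4_03] arc_vis_sym[OF C4_03, unfolded One_nat_def] C4_02 C4_02[unfolded One_nat_def] C4_13 C4_13[unfolded One_nat_def] C4_20 C4_20[unfolded One_nat_def] C4_31 C4_31[unfolded One_nat_def])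
qed (auto simp: E4_def)

lemma C4_arc: "arc_k_vis_graph j {..<4} E4"
  unfolding arc_k_vis_graph_def
  using A4_valid A4_disj C4_vis by (intro conjI exI[of _ A4]) auto

lemma adj5:
  assumes "finite V" "pairwise_disjoint_on V (\<lambda>v. bar_points (B v))" "V = {..<5}" "u < 5" "v < 5" "u \<noteq> v" "bar_k_visible 0 V B u v"
  shows "bY B u \<noteq> bY B v \<and> (\<exists>x. bl B u \<le> x \<and> x \<le> br B u \<and> bl B v \<le> x \<and> x \<le> br B v \<and>
     (\<forall>w. w < 5 \<longrightarrow> w \<noteq> u \<longrightarrow> w \<noteq> v \<longrightarrow> \<not> (bl B w \<le> x \<and> x \<le> br B w \<and> (bY B u < bY B w \<and> bY B w < bY B v \<or> bY B v < bY B w \<and> bY B w < bY B u))))"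
  using adj0[OF assms(1,2) _ _ assms(6,7)] assms(3-5) by simp

lemma K5_bar: "\<not> bar_k_vis_graph 0 {..<5} (\<lambda>u v. u < 5 \<and> v < 5 \<and> u \<noteq> v)"
proof
  assume "bar_k_vis_graph 0 {..<5} (\<lambda>u v. u < 5 \<and> v < 5 \<and> u \<noteq> v)"
  then obtain B where d: "pairwise_disjoint_on {..<5} (\<lambda>v. bar_points (B v))"
    and e: "\<And>u v. (u < 5 \<and> v < 5 \<and> u \<noteq> v) \<longleftrightarrow> u \<in> {..<5} \<and> v \<in> {..<5} \<and> u \<noteq> v \<and> bar_k_visible 0 {..<5} B u v"
    unfolding bar_k_vis_graph_def by blast
  have a: "bY B u \<noteq> bY B v \<and> (\<exists>x. bl B u \<le> x \<and> x \<le> br B u \<and> bl B v \<le> x \<and> x \<le> br B v \<and>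
     (\<forall>w. w < 5 \<longrightarrow> w \<noteq> u \<longrightarrow> w \<noteq> v \<longrightarrow> \<not> (bl B w \<le> x \<and> x \<le> br B w \<and> (bY B u < bY B w \<and> bY B w < bY B v \<or> bY B v < bY B w \<and> bY B w < bY B u))))"
    if "u < 5" "v < 5" "u \<noteq> v" for u v
    using adj5[OF _ d refl that] e[of u v] that by simp
  show False
    apply (rule K5flat[of "bY B" "bl B" "br B"])
    using a[of 0 1] apply simp
    using a[of 0 2] apply simp
    using a[of 0 3] apply simp
    using a[of 0 4] apply simp
    using a[of 1 2] apply simp
    using a[of 1 3] apply simp
    using a[of 1 4] apply simp
    using a[of 2 3] apply simp
    using a[of 2 4] apply simp
    using a[of 3 4] apply simp
    using a[of 0 1] apply simp
    using a[of 0 2] apply simp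
    using a[of 0 3] apply simp
    using a[of 0 4] apply simp
    using a[of 1 2] apply simp
    using a[of 1 3] apply simp
    using a[of 1 4] apply simp
    using a[of 2 3] apply simp
    using a[of 2 4] apply simp
    using a[of 3 4] apply simp
    done
qed

lemma betw_seg: "betw a y b \<longleftrightarrow> y \<in> closed_segment a b"
  unfolding betw_def seg_real by auto

lemma nonadj4:
  assumes "finite V" "V - {u,v} = {a,b}" "\<not> bar_k_visible i V B u v" "1 \<le> i"
    "bl B u \<le> x" "x \<le> br B u" "bl B v \<le> x" "x \<le> br B v"
  shows "bl B a \<le> x \<and> x \<le> br B a \<and> betw (bY B u) (bY B a) (bY B v) \<and> bl B b \<le> x \<and> x \<le> br B b \<and> betw (bY B u) (bY B b) (bY B v)"
proof -
  have "\<not> card (hitset V B u v x) \<le> i" using assms(3,5-8) unfolding bar_vis_iff by blast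
  hence c: "2 \<le> card (hitset V B u v x)" using assms(4) by simp
  have f: "finite (hitset V B u v x)" unfolding hitset_def using assms(1) by simp
  have "hitset V B u v x \<subseteq> {a,b}" unfolding hitset_def using assms(2) by blast
  from two_in[OF f this c] show ?thesis unfolding hitset_def betw_seg by blast
qed

lemma C4_bar: "1 \<le> i \<Longrightarrow> \<not> bar_k_vis_graph i {..<4} E4"
proof
  assume i: "1 \<le> i" and "bar_k_vis_graph i {..<4} E4"
  then obtain B where d: "pairwise_disjoint_on {..<4} (\<lambda>v. bar_points (B v))"
    and e: "\<And>u v. E4 u v \<longleftrightarrow> u \<in> {..<4} \<and> v \<in> {..<4} \<and> u \<noteq> v \<and> bar_k_visible i {..<4} B u v"
    unfolding bar_k_vis_graph_def by blast
  have ov: "\<exists>x. bl B u \<le> x \<and> x \<le> br B u \<and> bl B v \<le> x \<and> x \<le> br B v" if "E4 u v" for u v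
    using e[of u v] that unfolding bar_vis_iff by blast
  have n02: "\<not> bar_k_visible i {..<4} B 0 2" using e[of 0 2] by (simp add: E4_def)
  have n13: "\<not> bar_k_visible i {..<4} B 1 3" using e[of 1 3] by (simp add: E4_def)
  have s02: "{..<4::nat} - {0,2} = {1,3}" by auto
  have s13: "{..<4::nat} - {1,3} = {0,2}" by auto
  show False
  proof (rule C4flat[of "bl B" "br B" "bY B"])
    show "\<exists>x. bl B 0 \<le> x \<and> x \<le> br B 0 \<and> bl B 1 \<le> x \<and> x \<le> br B 1" using ov[of 0 1] by (simp add: E4_def)
    show "\<exists>x. bl B 1 \<le> x \<and> x \<le> br B 1 \<and> bl B 2 \<le> x \<and> x \<le> br B 2" using ov[of 1 2] by (simp add: E4_def)
    show "\<exists>x. bl B 2 \<le> x \<and> x \<le> br B 2 \<and> bl B 3 \<le> x \<and> x \<le> br B 3" using ov[of 2 3] by (simp add: E4_def)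
    show "\<exists>x. bl B 3 \<le> x \<and> x \<le> br B 3 \<and> bl B 0 \<le> x \<and> x \<le> br B 0" using ov[of 3 0] by (simp add: E4_def)
    show "bl B 1 \<le> x \<and> x \<le> br B 1 \<and> betw (bY B 0) (bY B 1) (bY B 2) \<and> bl B 3 \<le> x \<and> x \<le> br B 3 \<and> betw (bY B 0) (bY B 3) (bY B 2)"
      if "bl B 0 \<le> x" "x \<le> br B 0" "bl B 2 \<le> x" "x \<le> br B 2" for x
      using nonadj4[OF _ s02 n02 i that] by simp
    show "bl B 0 \<le> x \<and> x \<le> br B 0 \<and> betw (bY B 1) (bY B 0) (bY B 3) \<and> bl B 2 \<le> x \<and> x \<le> br B 2 \<and> betw (bY B 1) (bY B 2) (bY B 3)"
      if "bl B 1 \<le> x" "x \<le> br B 1" "bl B 3 \<le> x" "x \<le> br B 3" for x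
      using nonadj4[OF _ s13 n13 i that] by simp
    show "bY B u \<noteq> bY B v" if "u < 4" "v < 4" "u \<noteq> v" "bl B u \<le> x" "x \<le> br B u" "bl B v \<le> x" "x \<le> br B v" for x u v
      using disj_y[OF d _ _ that(3-7)] that(1,2) by simp
  qed
qed

theorem mainTheorem14:
  fixes i j :: nat
  shows "\<exists>(V :: nat set) (E :: nat \<Rightarrow> nat \<Rightarrow> bool).
           arc_k_vis_graph j V E \<and> \<not> bar_k_vis_graph i V E"
proof (cases "i = 0")
  case True
  thus ?thesis using K5_arc K5_bar by blast
next
  case False
  hence "1 \<le> i" by simp
  thus ?thesis using C4_arc C4_bar by blast
qed

end
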